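(* For every positive integer $n$, let $$U(n)=2\left\lfloor\frac{2^n}{2(n+1)}\right\rfloor,\qquad r(n)=2^n-(n+1)U(n),\qquad M_{\rm ad}(n)=\begin{cases}U(n)&\text{if } r(n)<2n,\\ U(n)+1 & \text{if } r(n)\ge 2n.\end{cases}$$ Then in the binary symmetric channel with two feedbacks and a single error, $M_{\rm ad}(n)$ messages can be transmitted with a strategy of length $n$.
   Context: Binary symmetric channel: alphabet $\{0,1\}$, an error replaces a symbol by the other symbol; "a single error" means at most one error during the whole transmission. A strategy of length $n$ with $k$ feedbacks: $n=n_1+\cdots+n_{k+1}$; for a message $m\in[M]$, the first $n_1$ symbols depend only on $m$; after $N_{i-1}=n_1+\cdots+n_{i-1}$ symbols have been sent ($i\ge2$), the encoder knows (error-free, instantaneously) the $N_{i-1}$ received symbols, and the $i$th block of $n_i$ symbols is a function of $m$ and these received symbols. The strategy transmits $M$ messages with a single error if the sets of output sequences reachable from distinct messages with at most one error are pairwise disjoint. *)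

theory Defs
  imports Main
begin

text \<open>A strategy with k feedbacks is given by
  a list bl of k+1 block lengths n_1,...,n_{k+1} (total length n = sum_list bl) and an encoder
  enc m p j: the symbol sent at position j (0-based) for message m, given the received prefix p.
  The encoder is only ever queried with p = the received symbols before the start of the
  block containing position j, so block i is a function of m and the N_{i-1} received symbols.\<close>

definition block_start :: "nat list \<Rightarrow> nat \<Rightarrow> nat" where
  "block_start bl j = Max {sum_list (take i bl) | i. i \<le> length bl \<and> sum_list (take i bl) \<le> j}"

definition reachable1 :: "nat list \<Rightarrow> (nat \<Rightarrow> bool list \<Rightarrow> nat \<Rightarrow> bool) \<Rightarrow> nat \<Rightarrow> bool list \<Rightarrow> bool" where
  "reachable1 bl enc m y \<longleftrightarrow>
     length y = sum_list bl \<and>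
     card {j. j < length y \<and> y ! j \<noteq> enc m (take (block_start bl j) y) j} \<le> 1"

definition transmits_single_error ::
  "nat list \<Rightarrow> (nat \<Rightarrow> bool list \<Rightarrow> nat \<Rightarrow> bool) \<Rightarrow> nat \<Rightarrow> bool" where
  "transmits_single_error bl enc M \<longleftrightarrow>
     (\<forall>m1 < M. \<forall>m2 < M. m1 \<noteq> m2 \<longrightarrow>
        \<not> (\<exists>y. reachable1 bl enc m1 y \<and> reachable1 bl enc m2 y))"

definition U :: "nat \<Rightarrow> nat" where
  "U n = 2 * (2 ^ n div (2 * (n + 1)))"


definition rr :: "nat \<Rightarrow> int" where
  "rr n = 2 ^ n - int (n + 1) * int (U n)"

definition M_ad :: "nat \<Rightarrow> nat" where
  "M_ad n = (if rr n < 2 * int n then U n else U n + 1)"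

end

theory Submission
  imports Defs
begin


fun hdist :: "bool list \<Rightarrow> bool list \<Rightarrow> nat" where
  "hdist (x#xs) (y#ys) = (if x = y then 0 else 1) + hdist xs ys"
| "hdist _ _ = 0"

lemma hdist_append:
  "length a = length b \<Longrightarrow> hdist (a @ c) (b @ d) = hdist a b + hdist c d"
  by (induction a b rule: list_induct2) auto

lemma hdist_sym: "hdist x y = hdist y x"
  by (induction x y rule: hdist.induct) auto

lemma hdist_self[simp]: "hdist x x = 0"
  by (induction x) auto

lemma hdist_eq0: "length x = length y \<Longrightarrow> hdist x y = 0 \<longleftrightarrow> x = y"
  by (induction x y rule: list_induct2) auto

lemma hdist_tri:
  "length x = length y \<Longrightarrow> length y = length z \<Longrightarrow> hdist x z \<le> hdist x y + hdist y z"
proof (induction x y arbitrary: z rule: list_induct2)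
  case Nil then show ?case by simp
next
  case (Cons a x b y)
  then obtain c z' where "z = c # z'" "length y = length z'" by (cases z) auto
  moreover have "hdist x z' \<le> hdist x y + hdist y z'" using Cons calculation by auto
  ultimately show ?case by auto
qed

lemma card_idx_Suc:
  "card {j. j < Suc L \<and> Q j} = (if Q 0 then 1 else 0) + card {j. j < L \<and> Q (Suc j)}"
proof -
  have e: "{j. j < Suc L \<and> Q j} = (if Q 0 then {0} else {}) \<union> Suc ` {j. j < L \<and> Q (Suc j)}"
    by (auto simp: less_Suc_eq_0_disj)
  have "card ((if Q 0 then {0} else {}) \<union> Suc ` {j. j < L \<and> Q (Suc j)})
      = card (if Q 0 then {0::nat} else {}) + card (Suc ` {j. j < L \<and> Q (Suc j)})"
    by (rule card_Un_disjoint) auto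
  also have "card (Suc ` {j. j < L \<and> Q (Suc j)}) = card {j. j < L \<and> Q (Suc j)}"
    by (rule card_image) auto
  finally show ?thesis using e by simp
qed

lemma hdist_card:
  "length x = length y \<Longrightarrow> hdist x y = card {j. j < length x \<and> x ! j \<noteq> y ! j}"
proof (induction x y rule: list_induct2)
  case Nil then show ?case by simp
next
  case (Cons a x b y)
  show ?case using Cons by (simp add: card_idx_Suc del: less_Suc_eq)
qed

definition W :: "nat \<Rightarrow> bool list set" where "W n = {x. length x = n}"

lemma finite_W[simp]: "finite (W n)"
proof -
  have "finite {xs. set xs \<subseteq> (UNIV::bool set) \<and> length xs = n}"
    by (rule finite_lists_length_eq) simp
  then show ?thesis by (simp add: W_def)
qed

lemma card_W: "card (W n) = 2 ^ n"
proof -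
  have "card {xs. set xs \<subseteq> (UNIV::bool set) \<and> length xs = n} = card (UNIV::bool set) ^ n"
    by (rule card_lists_length_eq) simp
  then show ?thesis by (simp add: W_def)
qed

definition ball1 :: "bool list \<Rightarrow> bool list set" where
  "ball1 c = {y. length y = length c \<and> hdist y c \<le> 1}"

definition sph1 :: "bool list \<Rightarrow> bool list set" where
  "sph1 c = {y. length y = length c \<and> hdist y c = 1}"

lemma ball1_Cons: "ball1 (a # c) = (\<lambda>y. a # y) ` ball1 c \<union> {(\<not> a) # c}"
proof (rule set_eqI)
  fix y show "y \<in> ball1 (a # c) \<longleftrightarrow> y \<in> (\<lambda>y. a # y) ` ball1 c \<union> {(\<not> a) # c}"
  proof (cases y)
    case Nil then show ?thesis by (auto simp: ball1_def)
  next
    case (Cons b y')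
    show ?thesis
    proof (cases "b = a")
      case True then show ?thesis using Cons by (auto simp: ball1_def)
    next
      case False
      then have "b = (\<not> a)" by auto
      then show ?thesis using Cons by (auto simp: ball1_def hdist_eq0)
    qed
  qed
qed

lemma sph1_Cons: "sph1 (a # c) = (\<lambda>y. a # y) ` sph1 c \<union> {(\<not> a) # c}"
proof (rule set_eqI)
  fix y show "y \<in> sph1 (a # c) \<longleftrightarrow> y \<in> (\<lambda>y. a # y) ` sph1 c \<union> {(\<not> a) # c}"
  proof (cases y)
    case Nil then show ?thesis by (auto simp: sph1_def)
  next
    case (Cons b y')
    show ?thesis
    proof (cases "b = a")
      case True then show ?thesis using Cons by (auto simp: sph1_def)
    next
      case False
      then have "b = (\<not> a)" by auto
      then show ?thesis using Cons by (auto simp: sph1_def hdist_eq0)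
    qed
  qed
qed

lemma ball1_sub: "ball1 c \<subseteq> W (length c)"
  by (auto simp: ball1_def W_def)

lemma sph1_sub: "sph1 c \<subseteq> W (length c)"
  by (auto simp: sph1_def W_def)

lemma finite_ball1[simp]: "finite (ball1 c)"
  using ball1_sub finite_W finite_subset by blast

lemma finite_sph1[simp]: "finite (sph1 c)"
  using sph1_sub finite_W finite_subset by blast

lemma card_ball1: "card (ball1 c) = length c + 1"
proof (induction c)
  case Nil
  have "ball1 [] = {[]}" by (auto simp: ball1_def)
  then show ?case by simp
next
  case (Cons a c)
  have "card ((\<lambda>y. a # y) ` ball1 c \<union> {(\<not> a) # c}) = card ((\<lambda>y. a # y) ` ball1 c) + card {(\<not> a) # c}"
    by (rule card_Un_disjoint) auto
  also have "card ((\<lambda>y. a # y) ` ball1 c) = card (ball1 c)"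
    by (rule card_image) (auto simp: inj_on_def)
  finally show ?case using Cons by (simp add: ball1_Cons)
qed

lemma card_sph1: "card (sph1 c) = length c"
proof (induction c)
  case Nil
  have "sph1 [] = {}" by (auto simp: sph1_def)
  then show ?case by simp
next
  case (Cons a c)
  have "card ((\<lambda>y. a # y) ` sph1 c \<union> {(\<not> a) # c}) = card ((\<lambda>y. a # y) ` sph1 c) + card {(\<not> a) # c}"
    by (rule card_Un_disjoint) auto
  also have "card ((\<lambda>y. a # y) ` sph1 c) = card (sph1 c)"
    by (rule card_image) (auto simp: inj_on_def)
  finally show ?case using Cons by (simp add: sph1_Cons)
qed

lemma balls_disjoint:
  assumes "length c = length d" "hdist c d \<ge> 3"
  shows "ball1 c \<inter> ball1 d = {}"
proof (rule ccontr)
  assume "ball1 c \<inter> ball1 d \<noteq> {}"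
  then obtain y where y: "y \<in> ball1 c" "y \<in> ball1 d" by blast
  then have "hdist c d \<le> hdist c y + hdist y d"
    using assms by (intro hdist_tri) (auto simp: ball1_def)
  then show False using y assms by (auto simp: ball1_def hdist_sym)
qed



definition okc :: "nat set \<Rightarrow> nat set \<Rightarrow> (nat \<Rightarrow> bool list) \<Rightarrow> (nat \<Rightarrow> bool list \<Rightarrow> bool list)
   \<Rightarrow> nat \<Rightarrow> bool list \<Rightarrow> bool list \<Rightarrow> bool" where
  "okc A B F2 F3 m y2 y3 \<longleftrightarrow>
     (m \<in> A \<and> length y2 = length (F2 m) \<and> length y3 = length (F3 m y2) \<and>
        hdist y2 (F2 m) + hdist y3 (F3 m y2) \<le> 1) \<or>
     (m \<in> B \<and> y2 = F2 m \<and> y3 = F3 m y2)"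

lemma card_filter_sum:
  "finite S \<Longrightarrow> card {x\<in>S. P x} = (\<Sum>x\<in>S. if P x then 1 else 0)"
  using sum.inter_filter[of S "\<lambda>_. 1::nat" P] by simp

lemma core:
  fixes A B :: "nat set" and n2 t K :: nat and cs :: "bool list list"
  assumes fA: "finite A" and fB: "finite B" and AB: "A \<inter> B = {}"
    and cs_len: "\<forall>c\<in>set cs. length c = t"
    and cs_dist: "\<forall>i j. i < length cs \<longrightarrow> j < length cs \<longrightarrow> i \<noteq> j \<longrightarrow> 3 \<le> hdist (cs!i) (cs!j)"
    and K_cs: "K \<le> length cs"
    and load: "K * (n2 + t + 1) \<le> 2^t"
    and capA: "card A \<le> 2^n2 * K"
    and weight: "card A * (n2 + t + 1) + card B \<le> 2^(n2+t)"
  shows "\<exists>F2 F3. (\<forall>m. length (F2 m) = n2) \<and> (\<forall>m y2. length (F3 m y2) = t) \<and>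
     (\<forall>m1 m2 y2 y3. m1 \<noteq> m2 \<longrightarrow> okc A B F2 F3 m1 y2 y3 \<longrightarrow> okc A B F2 F3 m2 y2 y3 \<longrightarrow> False)"
proof -
  have "card A \<le> card (W n2 \<times> {..<K})" using capA by (simp add: card_cartesian_product card_W)
  moreover have "finite (W n2 \<times> {..<K})" by simp
  ultimately obtain f where f_into: "f ` A \<subseteq> W n2 \<times> {..<K}" and f_inj: "inj_on f A"
    using card_le_inj[OF fA] by blast
  have fW: "fst (f m) \<in> W n2" and fK: "snd (f m) < K" if "m \<in> A" for m
    using f_into that by auto
  define Fr where "Fr u = {m\<in>A. fst (f m) = u}" for u
  define NA where "NA u = {m\<in>A. hdist (fst (f m)) u = 1}" for u
  have finFr: "finite (Fr u)" for u using fA by (simp add: Fr_def)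
  have finNA: "finite (NA u)" for u using fA by (simp add: NA_def)
  have FrK: "card (Fr u) \<le> K" for u
  proof -
    have "f ` Fr u \<subseteq> {u} \<times> {..<K}" using f_into by (auto simp: Fr_def)
    then have "card (f ` Fr u) \<le> card ({u} \<times> {..<K})" by (intro card_mono) auto
    moreover have "card (f ` Fr u) = card (Fr u)"
      by (rule card_image) (rule inj_on_subset[OF f_inj], auto simp: Fr_def)
    ultimately show ?thesis by simp
  qed
  have NA_eq: "NA u = (\<Union>v\<in>sph1 u. Fr v)" if "u \<in> W n2" for u
    using that fW by (auto simp: NA_def Fr_def sph1_def W_def hdist_sym)
  have NAK: "card (NA u) \<le> n2 * K" if "u \<in> W n2" for u
  proof -
    have "card (NA u) \<le> (\<Sum>v\<in>sph1 u. card (Fr v))"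
      unfolding NA_eq[OF that] by (rule card_UN_le) simp
    also have "\<dots> \<le> (\<Sum>v\<in>sph1 u. K)" by (rule sum_mono) (rule FrK)
    also have "\<dots> = n2 * K" using that by (simp add: card_sph1 W_def)
    finally show ?thesis .
  qed
  define cap where "cap u = 2^t - card (Fr u) * (t+1) - card (NA u)" for u
  have cap_eq: "cap u + card (Fr u) * (t+1) + card (NA u) = 2^t" if "u \<in> W n2" for u
  proof -
    have "card (Fr u) * (t+1) \<le> K * (t+1)" by (rule mult_le_mono1[OF FrK])
    moreover have "card (NA u) \<le> n2 * K" using NAK[OF that] .
    ultimately have "card (Fr u) * (t+1) + card (NA u) \<le> K * (n2 + t + 1)"
      by (simp add: algebra_simps)
    with load show ?thesis unfolding cap_def by linarith
  qed
  have sumFr: "(\<Sum>u\<in>W n2. card (Fr u)) = card A"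
  proof -
    have "(\<Sum>u\<in>W n2. sum (\<lambda>_. 1::nat) {m\<in>A. fst (f m) = u}) = sum (\<lambda>_. 1) A"
      by (rule sum.group) (use fA fW in auto)
    then show ?thesis by (simp add: Fr_def)
  qed
  have sumNA: "(\<Sum>u\<in>W n2. card (NA u)) = n2 * card A"
  proof -
    have "(\<Sum>u\<in>W n2. card (NA u)) = (\<Sum>u\<in>W n2. \<Sum>m\<in>A. if hdist (fst (f m)) u = 1 then 1 else 0)"
      unfolding NA_def using fA by (simp add: card_filter_sum)
    also have "\<dots> = (\<Sum>m\<in>A. \<Sum>u\<in>W n2. if hdist (fst (f m)) u = 1 then 1 else 0)"
      by (rule sum.swap)
    also have "\<dots> = (\<Sum>m\<in>A. card (sph1 (fst (f m))))"
    proof (rule sum.cong)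
      fix m assume m: "m \<in> A"
      have "{u\<in>W n2. hdist (fst (f m)) u = 1} = sph1 (fst (f m))"
        using fW[OF m] by (auto simp: sph1_def W_def hdist_sym)
      then show "(\<Sum>u\<in>W n2. if hdist (fst (f m)) u = 1 then 1 else 0) = card (sph1 (fst (f m)))"
        by (simp add: card_filter_sum[symmetric])
    qed simp
    also have "\<dots> = (\<Sum>m\<in>A. n2)"
      by (rule sum.cong) (use fW in \<open>auto simp: card_sph1 W_def\<close>)
    finally show ?thesis by simp
  qed
  have sumcap: "(\<Sum>u\<in>W n2. cap u) + card A * (t+1) + n2 * card A = 2^(n2+t)"
  proof -
    have "(\<Sum>u\<in>W n2. cap u + card (Fr u) * (t+1) + card (NA u)) = (\<Sum>u\<in>W n2. 2^t)"
      by (rule sum.cong[OF refl], rule cap_eq)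
    then have "(\<Sum>u\<in>W n2. cap u) + (\<Sum>u\<in>W n2. card (Fr u)) * (t+1) + (\<Sum>u\<in>W n2. card (NA u)) = 2^n2 * 2^t"
      by (simp add: sum.distrib sum_distrib_right card_W)
    then show ?thesis by (simp add: sumFr sumNA power_add)
  qed
  define Slots where "Slots = Sigma (W n2) (\<lambda>u. {..<cap u})"
  have "card Slots = (\<Sum>u\<in>W n2. cap u)" unfolding Slots_def by (subst card_SigmaI) auto
  then have "card B \<le> card Slots" using sumcap weight by (simp add: algebra_simps)
  moreover have "finite Slots" by (simp add: Slots_def)
  ultimately obtain g where g_into: "g ` B \<subseteq> Slots" and g_inj: "inj_on g B"
    using card_le_inj[OF fB] by blast
  have gW: "fst (g m) \<in> W n2" if "m \<in> B" for m using g_into that by (auto simp: Slots_def)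
  define F2 where "F2 m = (if m \<in> A then fst (f m) else if m \<in> B then fst (g m) else replicate n2 False)" for m
  have F2_len: "length (F2 m) = n2" for m
    using fW gW by (auto simp: F2_def W_def)
  define UB where "UB u = {m\<in>B. fst (g m) = u}" for u
  have UBcap: "card (UB u) \<le> cap u" for u
  proof -
    have "g ` UB u \<subseteq> {u} \<times> {..<cap u}" using g_into by (auto simp: UB_def Slots_def)
    then have "card (g ` UB u) \<le> card ({u} \<times> {..<cap u})" by (intro card_mono) auto
    moreover have "card (g ` UB u) = card (UB u)"
      by (rule card_image) (rule inj_on_subset[OF g_inj], auto simp: UB_def)
    ultimately show ?thesis by simp
  qed
  define Us where "Us u = NA u \<union> UB u" for u
  define cw where "cw m = cs ! snd (f m)" for m
  have cw_len: "length (cw m) = t" if "m \<in> A" for m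
    using fK[OF that] K_cs cs_len by (auto simp: cw_def)
  have cw_far: "3 \<le> hdist (cw m1) (cw m2)" if "m1 \<in> Fr u" "m2 \<in> Fr u" "m1 \<noteq> m2" for u m1 m2
  proof -
    have "f m1 \<noteq> f m2" using that f_inj by (auto simp: Fr_def inj_on_def)
    moreover have "fst (f m1) = fst (f m2)" using that by (auto simp: Fr_def)
    ultimately have "snd (f m1) \<noteq> snd (f m2)" by (metis prod.expand)
    moreover have "snd (f m1) < length cs" "snd (f m2) < length cs"
      using that fK K_cs by (auto simp: Fr_def intro: less_le_trans)
    ultimately show ?thesis using cs_dist by (simp add: cw_def)
  qed
  define R where "R u = W t - (\<Union>m\<in>Fr u. ball1 (cw m))" for u
  have cardR: "card (R u) = 2^t - card (Fr u) * (t+1)" for u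
  proof -
    have sub: "(\<Union>m\<in>Fr u. ball1 (cw m)) \<subseteq> W t"
      using ball1_sub cw_len by (fastforce simp: Fr_def)
    have "card (\<Union>m\<in>Fr u. ball1 (cw m)) = (\<Sum>m\<in>Fr u. card (ball1 (cw m)))"
    proof (rule card_UN_disjoint)
      show "\<forall>i\<in>Fr u. \<forall>j\<in>Fr u. i \<noteq> j \<longrightarrow> ball1 (cw i) \<inter> ball1 (cw j) = {}"
      proof (intro ballI impI)
        fix i j assume ij: "i \<in> Fr u" "j \<in> Fr u" "i \<noteq> j"
        have "length (cw i) = length (cw j)" using ij cw_len by (simp add: Fr_def)
        then show "ball1 (cw i) \<inter> ball1 (cw j) = {}"
          using balls_disjoint cw_far[OF ij] by blast
      qed
    qed (auto simp: finFr)
    also have "\<dots> = (\<Sum>m\<in>Fr u. t + 1)"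
      by (rule sum.cong) (auto simp: card_ball1 cw_len Fr_def)
    finally have "card (\<Union>m\<in>Fr u. ball1 (cw m)) = card (Fr u) * (t+1)" by simp
    then show ?thesis unfolding R_def
      by (simp add: card_Diff_subset[OF _ sub] card_W finFr)
  qed
  have "\<forall>u\<in>W n2. \<exists>h. h ` Us u \<subseteq> R u \<and> inj_on h (Us u)"
  proof
    fix u assume u: "u \<in> W n2"
    have "card (Us u) \<le> card (NA u) + card (UB u)" unfolding Us_def by (rule card_Un_le)
    also have "\<dots> \<le> card (NA u) + cap u" using UBcap by simp
    also have "\<dots> = card (R u)" using cap_eq[OF u] cardR[of u] by simp
    finally have "card (Us u) \<le> card (R u)" .
    moreover have "finite (Us u)" using finNA fB by (simp add: Us_def UB_def)
    moreover have "finite (R u)" by (simp add: R_def)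
    ultimately show "\<exists>h. h ` Us u \<subseteq> R u \<and> inj_on h (Us u)" using card_le_inj by blast
  qed
  then obtain H where H0: "\<forall>u\<in>W n2. H u ` Us u \<subseteq> R u \<and> inj_on (H u) (Us u)"
    by (rule bchoice[elim_format]) blast
  have H: "H u ` Us u \<subseteq> R u \<and> inj_on (H u) (Us u)" if "u \<in> W n2" for u
    using H0 that by blast
  define F3 where "F3 m y2 = (if m \<in> A \<and> fst (f m) = y2 then cw m
       else if y2 \<in> W n2 \<and> m \<in> Us y2 then H y2 m else replicate t False)" for m y2
  have F3_len: "length (F3 m y2) = t" for m y2
  proof -
    have "y2 \<in> W n2 \<Longrightarrow> m \<in> Us y2 \<Longrightarrow> H y2 m \<in> W t" using H by (fastforce simp: R_def)
    then show ?thesis using cw_len by (auto simp: F3_def W_def)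
  qed
  have key: "y2 \<in> W n2 \<and> ((m \<in> Fr y2 \<and> y3 \<in> ball1 (cw m)) \<or> (m \<in> Us y2 \<and> y3 = H y2 m))"
    if ok: "okc A B F2 F3 m y2 y3" for m y2 y3
  proof (cases "m \<in> A")
    case True
    then have lens: "length y2 = n2" "length y3 = t"
      and hd: "hdist y2 (fst (f m)) + hdist y3 (F3 m y2) \<le> 1"
      using ok fW[OF True] by (auto simp: okc_def F2_def F2_len F3_len W_def)
    have y2W: "y2 \<in> W n2" using lens by (simp add: W_def)
    show ?thesis
    proof (cases "fst (f m) = y2")
      case True
      then have "m \<in> Fr y2" "F3 m y2 = cw m" using \<open>m \<in> A\<close> by (auto simp: Fr_def F3_def)
      moreover have "y3 \<in> ball1 (cw m)" using hd lens cw_len[OF \<open>m \<in> A\<close>] \<open>F3 m y2 = cw m\<close> True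
        by (auto simp: ball1_def)
      ultimately show ?thesis using y2W by auto
    next
      case False
      have "length (fst (f m)) = n2" using fW[OF \<open>m \<in> A\<close>] by (simp add: W_def)
      then have "hdist y2 (fst (f m)) \<noteq> 0" using False lens hdist_eq0 by metis
      then have h1: "hdist y2 (fst (f m)) = 1" and h0: "hdist y3 (F3 m y2) = 0" using hd by auto
      have mNA: "m \<in> Us y2" using h1 \<open>m \<in> A\<close> by (auto simp: Us_def NA_def hdist_sym)
      have "F3 m y2 = H y2 m" using False mNA y2W by (auto simp: F3_def)
      moreover have "y3 = F3 m y2" using h0 lens F3_len hdist_eq0 by metis
      ultimately show ?thesis using y2W mNA by auto
    qed
  next
    case False
    then have mB: "m \<in> B" and e: "y2 = fst (g m)" "y3 = F3 m y2"
      using ok by (auto simp: okc_def F2_def)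
    have y2W: "y2 \<in> W n2" using gW[OF mB] e by simp
    have mUs: "m \<in> Us y2" using mB e by (auto simp: Us_def UB_def)
    have "F3 m y2 = H y2 m" using False mUs y2W by (auto simp: F3_def)
    then show ?thesis using y2W mUs e by auto
  qed
  have disj: False if ne: "m1 \<noteq> m2" and o1: "okc A B F2 F3 m1 y2 y3" and o2: "okc A B F2 F3 m2 y2 y3"
    for m1 m2 y2 y3
  proof -
    note k1 = key[OF o1] and k2 = key[OF o2]
    have y2W: "y2 \<in> W n2" using k1 by simp
    have Hy: "H y2 ` Us y2 \<subseteq> R y2" "inj_on (H y2) (Us y2)" using H[OF y2W] by auto
    consider "m1 \<in> Fr y2 \<and> y3 \<in> ball1 (cw m1)" "m2 \<in> Fr y2 \<and> y3 \<in> ball1 (cw m2)"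
      | "m1 \<in> Fr y2 \<and> y3 \<in> ball1 (cw m1)" "m2 \<in> Us y2 \<and> y3 = H y2 m2"
      | "m1 \<in> Us y2 \<and> y3 = H y2 m1" "m2 \<in> Fr y2 \<and> y3 \<in> ball1 (cw m2)"
      | "m1 \<in> Us y2 \<and> y3 = H y2 m1" "m2 \<in> Us y2 \<and> y3 = H y2 m2"
      using k1 k2 by blast
    then show False
    proof cases
      case 1
      have "ball1 (cw m1) \<inter> ball1 (cw m2) = {}"
        using 1 cw_far[of m1 y2 m2] ne cw_len balls_disjoint by (auto simp: Fr_def)
      then show False using 1 by blast
    next
      case 2
      then have "y3 \<in> R y2" using Hy by auto
      then show False using 2 by (auto simp: R_def)
    next
      case 3
      then have "y3 \<in> R y2" using Hy by auto
      then show False using 3 by (auto simp: R_def)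
    next
      case 4
      then show False using Hy ne by (auto simp: inj_on_def)
    qed
  qed
  show ?thesis
  proof (intro exI conjI allI impI)
    show "length (F2 m) = n2" for m by (rule F2_len)
    show "length (F3 m y2) = t" for m y2 by (rule F3_len)
    show False if "m1 \<noteq> m2" "okc A B F2 F3 m1 y2 y3" "okc A B F2 F3 m2 y2 y3" for m1 m2 y2 y3
      using disj that by blast
  qed
qed



lemma card_less_Suc_P:
  "card {m. m < Suc M \<and> P m} = card {m. m < M \<and> P m} + (if P M then 1 else 0)"
proof -
  have e: "{m. m < Suc M \<and> P m} = {m. m < M \<and> P m} \<union> (if P M then {M} else {})"
    by (auto simp: less_Suc_eq)
  show ?thesis unfolding e by (subst card_Un_disjoint) auto
qed

lemma card_odd: "card {m. m < M \<and> odd m} = M div 2"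
  by (induction M) (auto simp: card_less_Suc_P)

lemma card_even: "card {m. m < M \<and> even m} = M - M div 2"
  by (induction M) (auto simp: card_less_Suc_P)

lemma block_start3:
  assumes "j < 1 + n2 + t"
  shows "block_start [1, n2, t] j = (if j < 1 then 0 else if j < 1 + n2 then 1 else 1 + n2)"
proof -
  have i3: "i \<le> 3 \<Longrightarrow> i = 0 \<or> i = 1 \<or> i = 2 \<or> i = 3" for i :: nat by auto
  have S: "{sum_list (take i [1, n2, t]) | i. i \<le> length [1, n2, t] \<and> sum_list (take i [1, n2, t]) \<le> j}
      = {x. (x = 0 \<or> x = 1 \<or> x = 1 + n2 \<or> x = 1 + n2 + t) \<and> x \<le> j}"
  proof (rule set_eqI, rule iffI)
    fix x assume "x \<in> {sum_list (take i [1, n2, t]) | i. i \<le> length [1, n2, t] \<and> sum_list (take i [1, n2, t]) \<le> j}"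
    then obtain i where "i \<le> length [1, n2, t]" "x = sum_list (take i [1, n2, t])" "x \<le> j" by blast
    then have ii: "i \<le> 3" and xx: "x = sum_list (take i [1, n2, t])" "x \<le> j" by auto
    have "i = 0 \<or> i = 1 \<or> i = 2 \<or> i = 3" using ii by auto
    then show "x \<in> {x. (x = 0 \<or> x = 1 \<or> x = 1 + n2 \<or> x = 1 + n2 + t) \<and> x \<le> j}"
      using xx by (elim disjE) (simp_all add: numeral_eq_Suc)
  next
    fix x assume x: "x \<in> {x. (x = 0 \<or> x = 1 \<or> x = 1 + n2 \<or> x = 1 + n2 + t) \<and> x \<le> j}"
    then have xj: "x \<le> j" by simp
    from x consider "x = 0" | "x = 1" | "x = 1 + n2" | "x = 1 + n2 + t" by blast
    then have "\<exists>i. x = sum_list (take i [1, n2, t]) \<and> i \<le> length [1, n2, t] \<and> sum_list (take i [1, n2, t]) \<le> j"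
    proof cases
      case 1 then show ?thesis using xj by (intro exI[of _ 0]) simp
    next
      case 2 then show ?thesis using xj by (intro exI[of _ 1]) simp
    next
      case 3 then show ?thesis using xj by (intro exI[of _ 2]) (simp add: numeral_eq_Suc)
    next
      case 4 then show ?thesis using xj by (intro exI[of _ 3]) (simp add: numeral_eq_Suc)
    qed
    then show "x \<in> {sum_list (take i [1, n2, t]) | i. i \<le> length [1, n2, t] \<and> sum_list (take i [1, n2, t]) \<le> j}"
      by blast
  qed
  show ?thesis
    unfolding block_start_def S
    by (rule Max_eqI) (use assms in auto)
qed



lemma strategy:
  fixes M n2 t K :: nat and cs :: "bool list list"
  assumes cs_len: "\<forall>c\<in>set cs. length c = t"
    and cs_dist: "\<forall>i j. i < length cs \<longrightarrow> j < length cs \<longrightarrow> i \<noteq> j \<longrightarrow> 3 \<le> hdist (cs!i) (cs!j)"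
    and K_cs: "K \<le> length cs"
    and load: "K * (n2 + t + 1) \<le> 2^t"
    and capA: "M - M div 2 \<le> 2^n2 * K"
    and weight: "(M - M div 2) * (n2 + t + 1) + M div 2 \<le> 2^(n2+t)"
  shows "\<exists>enc. transmits_single_error [1, n2, t] enc M"
proof -
  define A where "A b = {m. m < M \<and> odd m = b}" for b
  define B where "B b = {m. m < M \<and> odd m \<noteq> b}" for b
  have core_b: "\<exists>F2 F3. (\<forall>m. length (F2 m) = n2) \<and> (\<forall>m y2. length (F3 m y2) = t) \<and>
     (\<forall>m1 m2 y2 y3. m1 \<noteq> m2 \<longrightarrow> okc (A b) (B b) F2 F3 m1 y2 y3 \<longrightarrow> okc (A b) (B b) F2 F3 m2 y2 y3 \<longrightarrow> False)"
    for b
  proof (rule core[OF _ _ _ cs_len cs_dist K_cs load])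
    show "finite (A b)" "finite (B b)" "A b \<inter> B b = {}" by (auto simp: A_def B_def)
    have cAB: "card (A b) + card (B b) = M"
    proof -
      have "card (A b \<union> B b) = card (A b) + card (B b)" by (rule card_Un_disjoint) (auto simp: A_def B_def)
      moreover have "A b \<union> B b = {..<M}" by (auto simp: A_def B_def)
      ultimately show ?thesis by simp
    qed
    have cA: "card (A b) \<le> M - M div 2"
    proof (cases b)
      case True
      then have "A b = {m. m < M \<and> odd m}" by (simp add: A_def)
      then show ?thesis by (simp add: card_odd)
    next
      case False
      then have "A b = {m. m < M \<and> even m}" by (simp add: A_def)
      then show ?thesis by (simp add: card_even)
    qed
    then show "card (A b) \<le> 2^n2 * K" using capA by linarith
    have "card (A b) * (n2 + t + 1) + card (B b) = card (A b) * (n2 + t) + M"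
      using cAB by (simp add: algebra_simps)
    also have "\<dots> \<le> (M - M div 2) * (n2 + t) + M"
      using cA by (simp add: mult_le_mono1)
    also have "\<dots> = (M - M div 2) * (n2 + t + 1) + M div 2"
    proof -
      obtain a c where ac: "a = M - M div 2" "c = M div 2" by blast
      then have e: "M = a + c" by simp
      have x: "a * (n2 + t) + (a + c) = a * (n2 + t + 1) + c" by (simp add: algebra_simps)
      have h1: "M - M div 2 = a" and h2: "M div 2 = c" using ac by simp_all
      show ?thesis unfolding h1 unfolding h2 by (subst e, rule x)
    qed
    finally show "card (A b) * (n2 + t + 1) + card (B b) \<le> 2^(n2+t)" using weight by linarith
  qed
  then have "\<forall>b. \<exists>G. (\<forall>m. length (fst G m) = n2) \<and> (\<forall>m y2. length (snd G m y2) = t) \<and>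
     (\<forall>m1 m2 y2 y3. m1 \<noteq> m2 \<longrightarrow> okc (A b) (B b) (fst G) (snd G) m1 y2 y3 \<longrightarrow> okc (A b) (B b) (fst G) (snd G) m2 y2 y3 \<longrightarrow> False)"
    by (metis fst_conv snd_conv)
  then obtain G where G: "\<And>b. (\<forall>m. length (fst (G b) m) = n2) \<and> (\<forall>m y2. length (snd (G b) m y2) = t) \<and>
     (\<forall>m1 m2 y2 y3. m1 \<noteq> m2 \<longrightarrow> okc (A b) (B b) (fst (G b)) (snd (G b)) m1 y2 y3 \<longrightarrow> okc (A b) (B b) (fst (G b)) (snd (G b)) m2 y2 y3 \<longrightarrow> False)"
    by (metis choice)
  define F2 where "F2 b = fst (G b)" for b
  define F3 where "F3 b = snd (G b)" for b
  have F2_len: "length (F2 b m) = n2" for b m using G by (simp add: F2_def)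
  have F3_len: "length (F3 b m y2) = t" for b m y2 using G by (simp add: F3_def)
  have Gdisj: "m1 \<noteq> m2 \<Longrightarrow> okc (A b) (B b) (F2 b) (F3 b) m1 y2 y3 \<Longrightarrow> okc (A b) (B b) (F2 b) (F3 b) m2 y2 y3 \<Longrightarrow> False"
    for b m1 m2 y2 y3 using G unfolding F2_def F3_def by blast
  define enc where "enc m p j = (if j = 0 then odd m else if j < 1 + n2 then F2 (p!0) m ! (j - 1)
      else F3 (p!0) m (take n2 (drop 1 p)) ! (j - 1 - n2))" for m p j
  define snt where "snt m y = [odd m] @ F2 (y!0) m @ F3 (y!0) m (take n2 (drop 1 y))" for m y
  have reach: "length y = 1 + n2 + t \<and> hdist y (snt m y) \<le> 1" if r: "reachable1 [1, n2, t] enc m y" for m y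
  proof -
    have ly: "length y = 1 + n2 + t" using r by (simp add: reachable1_def)
    have ls: "length (snt m y) = 1 + n2 + t" by (simp add: snt_def F2_len F3_len)
    have "{j. j < length y \<and> y ! j \<noteq> enc m (take (block_start [1, n2, t] j) y) j}
        = {j. j < length y \<and> y ! j \<noteq> snt m y ! j}"
    proof (rule Collect_cong)
      fix j
      show "(j < length y \<and> y ! j \<noteq> enc m (take (block_start [1, n2, t] j) y) j) =
            (j < length y \<and> y ! j \<noteq> snt m y ! j)"
      proof (cases "j < length y")
        case True
        then have jl: "j < 1 + n2 + t" using ly by simp
        have "enc m (take (block_start [1, n2, t] j) y) j = snt m y ! j"
        proof (cases "j = 0")
          case True then show ?thesis by (simp add: enc_def snt_def)
        next
          case False
          show ?thesis
          proof (cases "j < 1 + n2")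
            case True
            have "block_start [1, n2, t] j = 1" using block_start3[OF jl] True False by simp
            moreover have "take 1 y ! 0 = y ! 0" using ly by simp
            moreover have "j - 1 < n2" using True False by simp
            ultimately show ?thesis using True False
              by (simp add: enc_def snt_def nth_append F2_len)
          next
            case c2: False
            have "block_start [1, n2, t] j = 1 + n2" using block_start3[OF jl] c2 False by simp
            moreover have "take (1 + n2) y ! 0 = y ! 0" using ly by simp
            moreover have "take n2 (drop 1 (take (1 + n2) y)) = take n2 (drop 1 y)"
              by (simp add: drop_take)
            moreover have "\<not> j - 1 < n2" using c2 False by simp
            ultimately show ?thesis using c2 False
              by (simp add: enc_def snt_def nth_append F2_len)
          qed
        qed
        then show ?thesis by simp
      qed simp
    qed
    note eq = this
    have "card {j. j < length y \<and> y ! j \<noteq> enc m (take (block_start [1, n2, t] j) y) j} \<le> 1"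
      using r unfolding reachable1_def by blast
    then have "card {j. j < length y \<and> y ! j \<noteq> snt m y ! j} \<le> 1"
      unfolding eq .
    then show ?thesis using hdist_card[of y "snt m y"] ly ls by simp
  qed
  have okc_of: "okc (A (y!0)) (B (y!0)) (F2 (y!0)) (F3 (y!0)) m (take n2 (drop 1 y)) (drop (1 + n2) y)"
    if r: "reachable1 [1, n2, t] enc m y" and mM: "m < M" for m y
  proof -
    from reach[OF r] have ly: "length y = 1 + n2 + t" and h: "hdist y (snt m y) \<le> 1" by auto
    define y2 where "y2 = take n2 (drop 1 y)"
    define y3 where "y3 = drop (1 + n2) y"
    have ysplit: "y = [y!0] @ y2 @ y3"
    proof -
      have "y = take 1 y @ drop 1 y" by simp
      also have "take 1 y = [y!0]" using ly by (cases y) auto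
      also have "drop 1 y = y2 @ y3" unfolding y2_def y3_def
        by (metis append_take_drop_id drop_drop add.commute)
      finally show ?thesis by simp
    qed
    have l2: "length y2 = n2" using ly by (simp add: y2_def)
    have l3: "length y3 = t" using ly by (simp add: y3_def)
    have "hdist y (snt m y) = hdist [y!0] [odd m] + hdist y2 (F2 (y!0) m) + hdist y3 (F3 (y!0) m y2)"
      unfolding snt_def y2_def[symmetric]
      by (subst ysplit, subst hdist_append, simp, subst hdist_append, simp add: l2 F2_len, simp)
    with h have hh: "hdist [y!0] [odd m] + hdist y2 (F2 (y!0) m) + hdist y3 (F3 (y!0) m y2) \<le> 1" by simp
    show ?thesis
    proof (cases "odd m = y!0")
      case True
      then have "m \<in> A (y!0)" using mM by (simp add: A_def)
      then show ?thesis using hh True l2 l3 F2_len F3_len unfolding okc_def y2_def[symmetric] y3_def[symmetric]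
        by simp
    next
      case False
      then have mB: "m \<in> B (y!0)" using mM by (auto simp: B_def)
      have "hdist [y!0] [odd m] = 1" using False by auto
      then have "hdist y2 (F2 (y!0) m) = 0" "hdist y3 (F3 (y!0) m y2) = 0" using hh by auto
      then have "y2 = F2 (y!0) m" "y3 = F3 (y!0) m y2"
        using hdist_eq0 l2 l3 F2_len F3_len by metis+
      then show ?thesis using mB unfolding okc_def y2_def[symmetric] y3_def[symmetric] by simp
    qed
  qed
  have "transmits_single_error [1, n2, t] enc M"
    unfolding transmits_single_error_def
  proof (intro allI impI notI)
    fix m1 m2 assume m1: "m1 < M" and m2: "m2 < M" and ne: "m1 \<noteq> m2"
      and ex: "\<exists>y. reachable1 [1, n2, t] enc m1 y \<and> reachable1 [1, n2, t] enc m2 y"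
    then obtain y where r1: "reachable1 [1, n2, t] enc m1 y" and r2: "reachable1 [1, n2, t] enc m2 y" by blast
    show False using Gdisj[OF ne okc_of[OF r1 m1] okc_of[OF r2 m2]] .
  qed
  then show ?thesis by blast
qed



fun vt :: "bool list \<Rightarrow> nat" where
  "vt [] = 0"
| "vt (a # z) = (if a then length z + 1 else 0) + vt z"

lemma vt_diff:
  "length x = length y \<Longrightarrow>
    (hdist x y = 1 \<longrightarrow> 1 \<le> \<bar>int (vt x) - int (vt y)\<bar> \<and> \<bar>int (vt x) - int (vt y)\<bar> \<le> int (length x)) \<and>
    (hdist x y = 2 \<longrightarrow> 1 \<le> \<bar>int (vt x) - int (vt y)\<bar> \<and> \<bar>int (vt x) - int (vt y)\<bar> \<le> 2 * int (length x) - 1)"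
proof (induction x y rule: list_induct2)
  case Nil then show ?case by simp
next
  case (Cons a x b y)
  show ?case
  proof (cases "a = b")
    case True
    then show ?thesis using Cons by auto
  next
    case False
    have h: "hdist (a # x) (b # y) = 1 + hdist x y" using False by simp
    have d: "int (vt (a # x)) - int (vt (b # y)) =
       (if a then int (length x) + 1 else - int (length x) - 1) + (int (vt x) - int (vt y))"
      using False Cons(1) by auto
    show ?thesis
    proof (intro conjI impI)
      assume "hdist (a # x) (b # y) = 1"
      then have "hdist x y = 0" using h by simp
      then have "x = y" using hdist_eq0 Cons(1) by blast
      then show "1 \<le> \<bar>int (vt (a # x)) - int (vt (b # y))\<bar>"
        "\<bar>int (vt (a # x)) - int (vt (b # y))\<bar> \<le> int (length (a # x))"
        using d by auto
    next
      assume "hdist (a # x) (b # y) = 2"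
      then have "hdist x y = 1" using h by simp
      then have b1: "1 \<le> \<bar>int (vt x) - int (vt y)\<bar>" "\<bar>int (vt x) - int (vt y)\<bar> \<le> int (length x)"
        using Cons(2) by auto
      show "1 \<le> \<bar>int (vt (a # x)) - int (vt (b # y))\<bar>"
        "\<bar>int (vt (a # x)) - int (vt (b # y))\<bar> \<le> 2 * int (length (a # x)) - 1"
        using d b1 by (auto split: if_splits)
    qed
  qed
qed

lemma vt_far:
  assumes "length x = t" "length y = t" "x \<noteq> y" "vt x mod (2 * t) = vt y mod (2 * t)"
  shows "3 \<le> hdist x y"
proof (rule ccontr)
  assume "\<not> 3 \<le> hdist x y"
  moreover have "hdist x y \<noteq> 0" using assms hdist_eq0 by metis
  ultimately have h12: "hdist x y = 1 \<or> hdist x y = 2" by auto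
  define d where "d = int (vt x) - int (vt y)"
  have b: "1 \<le> \<bar>d\<bar>" "\<bar>d\<bar> \<le> 2 * int t - 1"
    using vt_diff[of x y] assms h12 unfolding d_def by auto
  have "int (vt x) mod (2 * int t) = int (vt y) mod (2 * int t)"
    using assms(4) by (metis of_nat_mod of_nat_mult of_nat_numeral)
  then have "(2 * int t) dvd d" unfolding d_def by (simp add: mod_eq_dvd_iff)
  then have "\<bar>2 * int t\<bar> \<le> \<bar>d\<bar>" using b by (intro dvd_imp_le_int) auto
  then show False using b by simp
qed

lemma vt_code:
  assumes "t \<ge> 1"
  shows "\<exists>cs. (\<forall>c\<in>set cs. length c = t) \<and>
    (\<forall>i j. i < length cs \<longrightarrow> j < length cs \<longrightarrow> i \<noteq> j \<longrightarrow> 3 \<le> hdist (cs!i) (cs!j)) \<and>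
    2^t \<le> 2 * t * length cs"
proof -
  define p where "p = 2 * t"
  have p0: "p > 0" using assms by (simp add: p_def)
  define Cl where "Cl r = {z\<in>W t. vt z mod p = r}" for r
  have sumCl: "(\<Sum>r<p. card (Cl r)) = 2^t"
  proof -
    have "(\<Sum>r\<in>{..<p}. sum (\<lambda>_. 1::nat) {z\<in>W t. vt z mod p = r}) = sum (\<lambda>_. 1) (W t)"
      by (rule sum.group) (use p0 in auto)
    then show ?thesis by (simp add: Cl_def card_W)
  qed
  have "\<exists>r<p. 2^t \<le> p * card (Cl r)"
  proof (rule ccontr)
    assume "\<not> (\<exists>r<p. 2^t \<le> p * card (Cl r))"
    then have lt: "\<And>r. r < p \<Longrightarrow> p * card (Cl r) < 2^t" by auto
    have "(\<Sum>r<p. p * card (Cl r)) < (\<Sum>r<p. (2::nat)^t)"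
      by (rule sum_strict_mono) (use p0 lt in auto)
    then have "p * 2^t < p * 2^t" by (simp add: sum_distrib_left[symmetric] sumCl)
    then show False by simp
  qed
  then obtain r where r: "2^t \<le> p * card (Cl r)" by blast
  have "finite (Cl r)" by (simp add: Cl_def)
  then obtain cs where cs: "set cs = Cl r" "distinct cs" using finite_distinct_list by blast
  have len: "length cs = card (Cl r)" using cs distinct_card by fastforce
  show ?thesis
  proof (intro exI[of _ cs] conjI allI impI)
    show "\<forall>c\<in>set cs. length c = t" using cs by (auto simp: Cl_def W_def)
    show "2^t \<le> 2 * t * length cs" using r len by (simp add: p_def)
  next
    fix i j assume ij: "i < length cs" "j < length cs" "i \<noteq> j"
    have "cs!i \<in> Cl r" "cs!j \<in> Cl r" using ij cs nth_mem by blast+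
    moreover have "cs!i \<noteq> cs!j" using ij cs(2) by (simp add: nth_eq_iff_index_eq)
    ultimately show "3 \<le> hdist (cs!i) (cs!j)"
      by (intro vt_far[where t = t]) (auto simp: Cl_def W_def p_def)
  qed
qed

fun okl :: "bool list list \<Rightarrow> bool" where
  "okl [] = True"
| "okl (c # cs) = ((\<forall>d\<in>set cs. 3 \<le> hdist c d) \<and> okl cs)"

lemma okl_dist:
  "okl cs \<Longrightarrow> \<forall>i j. i < length cs \<longrightarrow> j < length cs \<longrightarrow> i \<noteq> j \<longrightarrow> 3 \<le> hdist (cs!i) (cs!j)"
proof (induction cs)
  case Nil then show ?case by simp
next
  case (Cons c cs)
  show ?case
  proof (intro allI impI)
    fix i j assume ij: "i < length (c # cs)" "j < length (c # cs)" "i \<noteq> j"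
    show "3 \<le> hdist ((c # cs) ! i) ((c # cs) ! j)"
    proof (cases i)
      case 0
      then obtain j' where "j = Suc j'" "j' < length cs" using ij by (cases j) auto
      then show ?thesis using Cons.prems 0 nth_mem by auto
    next
      case (Suc i')
      show ?thesis
      proof (cases j)
        case 0
        then have "i' < length cs" using ij Suc by auto
        then show ?thesis using Cons.prems Suc 0 nth_mem hdist_sym by (metis nth_Cons_0 nth_Cons_Suc okl.simps(2))
      next
        case (Suc j')
        then show ?thesis using Cons ij \<open>i = Suc i'\<close> by auto
      qed
    qed
  qed
qed

definition code6 :: "bool list list" where
  "code6 = [[False,True,True,True,False,True],[True,False,False,False,False,True],
    [False,False,True,False,True,True],[True,True,False,True,True,True],
    [True,False,True,True,False,False],[True,True,True,False,True,False],
    [False,False,False,True,True,False]]"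

lemma code6_ok: "okl code6" "\<forall>c\<in>set code6. length c = 6" "length code6 = 7"
  by (simp_all add: code6_def)

definition code7 :: "bool list list" where
  "code7 = [[False,True,False,False,False,False,False],
    [True,True,True,False,True,False,True],
    [True,False,True,True,True,True,True],
    [False,False,True,False,False,True,True],
    [True,False,True,True,False,False,False],
    [False,True,True,False,True,True,False],
    [True,True,False,False,False,True,True],
    [True,False,False,False,True,True,False],
    [False,True,False,True,True,True,True],
    [False,False,False,False,True,False,True],
    [False,False,False,True,False,True,False]]"

lemma code7_ok: "okl code7" "\<forall>c\<in>set code7. length c = 7" "length code7 = 11"
  by (simp_all add: code7_def)

definition code8 :: "bool list list" where
  "code8 = [[False,True,True,False,False,True,True,True],
    [True,True,False,False,True,True,False,False],
    [False,False,True,True,True,False,False,True],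
    [True,False,True,False,True,True,True,True],
    [True,False,False,True,False,False,False,False],
    [True,True,True,False,True,False,False,True],
    [False,True,False,False,True,False,True,True],
    [True,False,True,True,True,True,False,False],
    [False,False,True,False,False,True,False,False],
    [False,False,False,True,False,True,True,True],
    [True,True,True,False,False,False,True,False],
    [True,True,True,True,False,True,False,True],
    [True,True,False,True,True,True,True,True],
    [False,True,True,True,False,False,False,False],
    [True,False,False,False,False,True,True,False],
    [False,True,True,True,True,True,True,False],
    [True,False,True,True,False,False,True,True],
    [False,False,False,False,True,True,False,True],
    [False,False,True,False,True,False,True,False]]"

lemma code8_ok: "okl code8" "\<forall>c\<in>set code8. length c = 8" "length code8 = 19"
  by (simp_all add: code8_def)



lemma pelc:
  assumes "n \<ge> 1"
  shows "(M_ad n - M_ad n div 2) * n + M_ad n div 2 \<le> 2^(n-1)"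
proof -
  obtain k where nk: "n = Suc k" using assms by (cases n) auto
  define D where "D = 2^n div (2*(n+1))"
  define R where "R = 2^n mod (2*(n+1))"
  have e0: "2^n = D * (2*(n+1)) + R" unfolding D_def R_def by (rule div_mult_mod_eq[symmetric])
  then have e: "2^n = 2*(n+1)*D + R" by (simp add: mult.commute)
  have p2: "(2::nat)^n = 2 * 2^k" using nk by simp
  have Ud: "U n = 2 * D" by (simp add: U_def D_def)
  have "rr n = int (2^n) - int ((n+1) * (2*D))" by (simp add: rr_def Ud algebra_simps)
  also have "\<dots> = int R"
  proof -
    have "(2::nat)^n = (n+1)*(2*D) + R" using e by (simp add: algebra_simps)
    then have "int (2^n) = int ((n+1)*(2*D)) + int R" by (metis of_nat_add)
    then show ?thesis by simp
  qed
  finally have rrR: "rr n = int R" .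
  show ?thesis
  proof (cases "R < 2 * n")
    case True
    then have M: "M_ad n = 2 * D" using rrR Ud by (simp add: M_ad_def)
    have "2 * ((n+1) * D) \<le> 2 * 2^k" using e p2 by (simp add: algebra_simps)
    then have "(n+1) * D \<le> 2^k" by simp
    then show ?thesis using M nk by (simp add: algebra_simps)
  next
    case False
    then have M: "M_ad n = 2 * D + 1" using rrR Ud by (simp add: M_ad_def)
    have "even R"
    proof -
      have "even ((2::nat)^n)" using nk by simp
      then have "even (2*(n+1)*D + R)" using e by simp
      then show ?thesis by simp
    qed
    then obtain r where r: "R = 2 * r" by blast
    have "2 * ((n+1) * D + n) \<le> 2 * 2^k" using e p2 False r by (simp add: algebra_simps)
    then have "(n+1) * D + n \<le> 2^k" by simp
    moreover have "(2 * D + 1) div 2 = D" by simp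
    ultimately show ?thesis using M nk by (simp add: algebra_simps)
  qed
qed

lemma pow_bound: "k \<ge> 9 \<Longrightarrow> (2*k+1)*(2*k+2) \<le> (2::nat)^k"
proof (induction k rule: nat_induct_at_least)
  case base then show ?case by simp
next
  case (Suc k)
  have "(2*Suc k+1)*(2*Suc k+2) \<le> 2 * ((2*k+1)*(2*k+2))"
  proof -
    have kk: "9 * k \<le> k * k" using Suc(1) by (rule mult_le_mono1)
    have e1: "(2*Suc k+1)*(2*Suc k+2) = 4*(k*k) + 14*k + 12" by (simp add: algebra_simps)
    have e2: "2 * ((2*k+1)*(2*k+2)) = 8*(k*k) + 12*k + 4" by (simp add: algebra_simps)
    show ?thesis unfolding e1 e2 using kk Suc(1) by linarith
  qed
  also have "\<dots> \<le> 2 * 2^k" using Suc(2) by simp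
  finally show ?case by simp
qed

lemma capA_gen:
  fixes A Bm n n2 t K :: nat
  assumes nn: "n = n2 + t + 1" and w: "A * n + Bm \<le> 2^(n2+t)" and ab: "A \<le> Bm + 1"
    and K: "K = 2^t div n" and big: "n * (n+1) \<le> 2^t"
  shows "A \<le> 2^n2 * K"
proof (rule ccontr)
  assume "\<not> A \<le> 2^n2 * K"
  then have a: "2^n2 * K + 1 \<le> A" by simp
  define P where "P = (2::nat)^n2"
  define T where "T = (2::nat)^t"
  define m where "m = T mod n"
  have n1: "n \<ge> 1" using nn by simp
  have PT: "2^(n2+t) = P * T" by (simp add: P_def T_def power_add)
  have Te: "T = n * K + m" by (simp add: K T_def m_def)
  have mn: "m < n" using n1 by (simp add: m_def)
  have An: "A * (n+1) \<le> P * T + 1" using w ab PT by (simp add: algebra_simps)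
  have "(P * K + 1) * (n+1) \<le> A * (n+1)" by (rule mult_le_mono1) (use a in \<open>simp add: P_def\<close>)
  with An have s1: "P*K*n + P*K + n \<le> P * T" by (simp add: algebra_simps)
  have s2: "P * T = P*K*n + P*m" using Te by (simp add: algebra_simps)
  have "n * (n+1) \<le> n * K + m" using big Te by (simp add: T_def)
  then have "n * n + n \<le> n * K + m" by (simp add: algebra_simps)
  then have nn: "n * n < n * K" using mn by linarith
  have Kn: "n < K"
  proof (rule ccontr)
    assume "\<not> n < K"
    then have "n * K \<le> n * n" by (simp add: mult_le_mono2)
    then show False using nn by linarith
  qed
  have "P * n < P * K" using Kn by (simp add: P_def)
  moreover have "P * m < P * n" using mn by (simp add: P_def)
  ultimately show False using s1 s2 by linarith
qed



definition goal4 :: "nat \<Rightarrow> bool" where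
  "goal4 n \<longleftrightarrow> (\<exists>bl enc. length bl = 3 \<and> sum_list bl = n \<and> transmits_single_error bl enc (M_ad n))"

lemma case_generic:
  fixes n nb t K :: nat and cs :: "bool list list"
  assumes nn: "n = 1 + nb + t"
    and cs_len: "\<forall>c\<in>set cs. length c = t"
    and cs_dist: "\<forall>i j. i < length cs \<longrightarrow> j < length cs \<longrightarrow> i \<noteq> j \<longrightarrow> 3 \<le> hdist (cs!i) (cs!j)"
    and K_cs: "K \<le> length cs"
    and load: "K * n \<le> 2^t"
    and capA: "M_ad n - M_ad n div 2 \<le> 2^nb * K"
  shows "goal4 n"
proof -
  have w: "(M_ad n - M_ad n div 2) * (nb + t + 1) + M_ad n div 2 \<le> 2^(nb+t)"
    using pelc[of n] nn by simp
  have l: "K * (nb + t + 1) \<le> 2^t" using load nn by simp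
  obtain enc where "transmits_single_error [1, nb, t] enc (M_ad n)"
    using strategy[OF cs_len cs_dist K_cs l capA w] by blast
  then show ?thesis unfolding goal4_def using nn
    by (intro exI[of _ "[1, nb, t]"] exI[of _ enc]) simp
qed

lemma case_vt:
  fixes n nb t K :: nat
  assumes nn: "n = 1 + nb + t" and t1: "t \<ge> 1"
    and load: "K * n \<le> 2^t" and code: "2 * t * K \<le> 2^t"
    and capA: "M_ad n - M_ad n div 2 \<le> 2^nb * K"
  shows "goal4 n"
proof -
  obtain cs where cs: "\<forall>c\<in>set cs. length c = t"
    "\<forall>i j. i < length cs \<longrightarrow> j < length cs \<longrightarrow> i \<noteq> j \<longrightarrow> 3 \<le> hdist (cs!i) (cs!j)"
    "2^t \<le> 2 * t * length cs"
    using vt_code[OF t1] by blast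
  have "(2 * t) * K \<le> (2 * t) * length cs" using code cs(3) by linarith
  then have "K \<le> length cs" using t1 by simp
  then show ?thesis using case_generic[OF nn cs(1) cs(2) _ load capA] by blast
qed

lemma case_big:
  assumes n18: "n \<ge> 18"
  shows "goal4 n"
proof -
  define t where "t = n div 2"
  define nb where "nb = n - 1 - t"
  define K where "K = 2^t div n"
  have t9: "t \<ge> 9" using n18 by (simp add: t_def)
  have nn: "n = 1 + nb + t" using n18 by (simp add: nb_def t_def)
  have n21: "n \<le> 2 * t + 1" by (simp add: t_def)
  have "n * (n+1) \<le> (2*t+1) * (2*t+2)" using n21 by (intro mult_le_mono) auto
  also have "\<dots> \<le> 2^t" by (rule pow_bound[OF t9])
  finally have big: "n * (n+1) \<le> 2^t" .
  have load: "K * n \<le> 2^t" by (simp add: K_def)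
  have a: "2 * t * K \<le> n * K" by (rule mult_le_mono1) (simp add: t_def)
  have b: "n * K \<le> 2^t" using load by (simp add: mult.commute)
  have code: "2 * t * K \<le> 2^t" by (rule le_trans[OF a b])
  have capA: "M_ad n - M_ad n div 2 \<le> 2^nb * K"
  proof (rule capA_gen[where n = n and t = t and Bm = "M_ad n div 2"])
    show "n = nb + t + 1" using nn by simp
    show "(M_ad n - M_ad n div 2) * n + M_ad n div 2 \<le> 2^(nb+t)"
      using pelc[of n] nn by simp
    show "M_ad n - M_ad n div 2 \<le> M_ad n div 2 + 1" by simp
    show "K = 2^t div n" by (simp add: K_def)
    show "n * (n+1) \<le> 2^t" by (rule big)
  qed
  show ?thesis by (rule case_vt[OF nn _ load code capA]) (use t9 in simp)
qed

lemma case_1: "goal4 1"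
proof -
  have M: "M_ad 1 = 1" by (simp add: M_ad_def rr_def U_def)
  have "transmits_single_error [1, 0, 0] (\<lambda>_ _ _. False) 1"
    by (simp add: transmits_single_error_def)
  then show ?thesis unfolding goal4_def M by (intro exI[of _ "[1, 0, 0]"]) auto
qed

lemma small_cases:
  assumes "1 \<le> n" "n \<le> 17"
  shows "goal4 n"
proof -
  have Mv: "M_ad 2 = 1" "M_ad 3 = 2" "M_ad 4 = 2" "M_ad 5 = 4" "M_ad 6 = 8" "M_ad 7 = 16"
    "M_ad 8 = 28" "M_ad 9 = 50" "M_ad 10 = 92" "M_ad 11 = 170" "M_ad 12 = 314" "M_ad 13 = 584"
    "M_ad 14 = 1092" "M_ad 15 = 2048" "M_ad 16 = 3854" "M_ad 17 = 7280"
    by (simp_all add: M_ad_def rr_def U_def)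
  have "n = 1 \<or> n = 2 \<or> n = 3 \<or> n = 4 \<or> n = 5 \<or> n = 6 \<or> n = 7 \<or> n = 8 \<or> n = 9 \<or>
    n = 10 \<or> n = 11 \<or> n = 12 \<or> n = 13 \<or> n = 14 \<or> n = 15 \<or> n = 16 \<or> n = 17" using assms by presburger
  then show ?thesis
  proof (elim disjE)
    assume "n = 1" then show ?thesis using case_1 by simp
  next
    assume a: "n = 2" show ?thesis unfolding a
      apply (rule case_vt[where nb = 0 and t = 1 and K = 1]) apply (simp_all add: Mv)
      done
  next
    assume a: "n = 3" show ?thesis unfolding a
      apply (rule case_vt[where nb = 0 and t = 2 and K = 1]) apply (simp_all add: Mv)
      done
  next
    assume a: "n = 4" show ?thesis unfolding a
      apply (rule case_vt[where nb = 1 and t = 2 and K = 1]) apply (simp_all add: Mv)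
      done
  next
    assume a: "n = 5" show ?thesis unfolding a
      apply (rule case_vt[where nb = 1 and t = 3 and K = 1]) apply (simp_all add: Mv)
      done
  next
    assume a: "n = 6" show ?thesis unfolding a
      apply (rule case_vt[where nb = 2 and t = 3 and K = 1]) apply (simp_all add: Mv)
      done
  next
    assume a: "n = 7" show ?thesis unfolding a
      apply (rule case_vt[where nb = 3 and t = 3 and K = 1]) apply (simp_all add: Mv)
      done
  next
    assume a: "n = 8" show ?thesis unfolding a
      apply (rule case_vt[where nb = 4 and t = 3 and K = 1]) apply (simp_all add: Mv)
      done
  next
    assume a: "n = 9" show ?thesis unfolding a
      apply (rule case_generic[where nb = 2 and t = 6 and K = 7 and cs = code6])
      apply (simp_all add: Mv code6_ok okl_dist)
      done
  next
    assume a: "n = 10" show ?thesis unfolding a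
      apply (rule case_vt[where nb = 4 and t = 5 and K = 3]) apply (simp_all add: Mv)
      done
  next
    assume a: "n = 11" show ?thesis unfolding a
      apply (rule case_generic[where nb = 3 and t = 7 and K = 11 and cs = code7])
      apply (simp_all add: Mv code7_ok okl_dist)
      done
  next
    assume a: "n = 12" show ?thesis unfolding a
      apply (rule case_vt[where nb = 5 and t = 6 and K = 5]) apply (simp_all add: Mv)
      done
  next
    assume a: "n = 13" show ?thesis unfolding a
      apply (rule case_generic[where nb = 4 and t = 8 and K = 19 and cs = code8])
      apply (simp_all add: Mv code8_ok okl_dist)
      done
  next
    assume a: "n = 14" show ?thesis unfolding a
      apply (rule case_vt[where nb = 6 and t = 7 and K = 9]) apply (simp_all add: Mv)
      done
  next
    assume a: "n = 15" show ?thesis unfolding a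
      apply (rule case_vt[where nb = 10 and t = 4 and K = 1]) apply (simp_all add: Mv)
      done
  next
    assume a: "n = 16" show ?thesis unfolding a
      apply (rule case_vt[where nb = 11 and t = 4 and K = 1]) apply (simp_all add: Mv)
      done
  next
    assume a: "n = 17" show ?thesis unfolding a
      apply (rule case_vt[where nb = 8 and t = 8 and K = 15]) apply (simp_all add: Mv)
      done
  qed
qed

theorem theorem4:
  fixes n :: nat
  assumes "n \<ge> 1"
  shows "\<exists>bl enc. length bl = 3 \<and> sum_list bl = n \<and> transmits_single_error bl enc (M_ad n)"
proof -
  have "goal4 n"
  proof (cases "n \<ge> 18")
    case True then show ?thesis by (rule case_big)
  next
    case False then show ?thesis using small_cases assms by simp
  qed
  then show ?thesis by (simp add: goal4_def)
qed

end
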